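(* Let $n\ge 2$ and let $S=[A_0,\dots,A_n]$ be an $n$-pre-kite. If the circumcenter and the centroid of $S$ coincide, then $S$ is a regular $n$-simplex.
   Context: An $n$-simplex is the convex hull of $n+1$ affinely independent points in a Euclidean space. It is an $n$-pre-kite if one of its facets (the $(n-1)$-simplex obtained by deleting one vertex) is a regular $(n-1)$-simplex, i.e. has all edges of equal length. The circumcenter of $S$ is the center of the $(n-1)$-sphere in the affine hull of $S$ passing through all vertices; the centroid is $(A_0+\cdots+A_n)/(n+1)$. $S$ is regular if all its edges have the same length. *)

theory Defs
  imports "HOL-Analysis.Analysis"
begin

definition is_simplex :: "nat \<Rightarrow> (nat \<Rightarrow> 'a::euclidean_space) \<Rightarrow> bool" where
  "is_simplex n A \<longleftrightarrow> inj_on A {0..n} \<and> \<not> affine_dependent (A ` {0..n})"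

definition is_pre_kite :: "nat \<Rightarrow> (nat \<Rightarrow> 'a::euclidean_space) \<Rightarrow> bool" where
  "is_pre_kite n A \<longleftrightarrow> is_simplex n A \<and>
     (\<exists>k\<le>n. \<forall>i\<le>n. \<forall>j\<le>n. \<forall>p\<le>n. \<forall>q\<le>n.
        i \<noteq> k \<and> j \<noteq> k \<and> p \<noteq> k \<and> q \<noteq> k \<and> i \<noteq> j \<and> p \<noteq> q
        \<longrightarrow> dist (A i) (A j) = dist (A p) (A q))"

definition circumcenter :: "nat \<Rightarrow> (nat \<Rightarrow> 'a::euclidean_space) \<Rightarrow> 'a" where
  "circumcenter n A = (THE c. c \<in> affine hull (A ` {0..n}) \<and>
      (\<forall>i\<le>n. dist c (A i) = dist c (A 0)))"

definition centroid :: "nat \<Rightarrow> (nat \<Rightarrow> 'a::euclidean_space) \<Rightarrow> 'a" where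
  "centroid n A = (1 / real (n + 1)) *\<^sub>R (\<Sum>i\<le>n. A i)"

definition is_regular_simplex :: "nat \<Rightarrow> (nat \<Rightarrow> 'a::euclidean_space) \<Rightarrow> bool" where
  "is_regular_simplex n A \<longleftrightarrow> is_simplex n A \<and>
     (\<forall>i\<le>n. \<forall>j\<le>n. \<forall>p\<le>n. \<forall>q\<le>n. i \<noteq> j \<and> p \<noteq> q
        \<longrightarrow> dist (A i) (A j) = dist (A p) (A q))"

end

theory Submission imports Defs begin

lemma orth_span_zero:
  fixes x :: "'a::euclidean_space"
  assumes "x \<in> span W" "\<And>w. w \<in> W \<Longrightarrow> x \<bullet> w = 0"
  shows "x = 0"
proof -
  have "orthogonal x x"
    by (rule orthogonal_to_span[OF assms(1)]) (simp add: orthogonal_def assms(2))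
  then show ?thesis by (simp add: orthogonal_def)
qed

lemma solve_unique:
  fixes W :: "'a::euclidean_space set"
  assumes ind: "independent W"
  shows "\<exists>!x. x \<in> span W \<and> (\<forall>w\<in>W. x \<bullet> w = w \<bullet> w / 2)"
proof -
  have indE: "finite W \<and> (\<forall>c. (\<Sum>v\<in>W. c v *\<^sub>R v) = 0 \<longrightarrow> (\<forall>v\<in>W. c v = 0))"
    using ind independent_explicit[of W] by argo
  have fin: "finite W" using indE by simp
  define T where "T = (\<lambda>x. \<Sum>w\<in>W. (x \<bullet> w) *\<^sub>R w)"
  have lin: "linear T"
    unfolding T_def
    by (rule linearI) (simp_all add: inner_add_left scaleR_add_left sum.distrib scaleR_sum_right)
  have sub: "T ` span W \<subseteq> span W"
    unfolding T_def by (auto intro!: span_sum span_scale intro: span_base)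
  have Tx: "T x \<bullet> x = (\<Sum>w\<in>W. (x \<bullet> w)^2)" for x
  proof -
    have "T x \<bullet> x = (\<Sum>w\<in>W. (x \<bullet> w) * (w \<bullet> x))"
      unfolding T_def by (simp add: inner_sum_left)
    also have "\<dots> = (\<Sum>w\<in>W. (x \<bullet> w)^2)"
      by (rule sum.cong) (simp_all add: power2_eq_square inner_commute)
    finally show ?thesis .
  qed
  have inj: "inj_on T (span W)"
  proof (subst linear_inj_on_iff_eq_0[OF lin subspace_span], intro ballI impI)
    fix x assume x: "x \<in> span W" "T x = 0"
    then have "(\<Sum>w\<in>W. (x \<bullet> w)^2) = 0" using Tx[of x] by simp
    then have "\<forall>w\<in>W. (x \<bullet> w)^2 = 0"
      using sum_nonneg_eq_0_iff[OF fin, of "\<lambda>w. (x \<bullet> w)^2"] by simp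
    then show "x = 0" using orth_span_zero[OF x(1)] by simp
  qed
  have eq: "T ` span W = span W"
  proof (rule subspace_dim_equal)
    show "subspace (T ` span W)" by (rule linear_subspace_image[OF lin subspace_span])
    show "subspace (span W)" by simp
    show "T ` span W \<subseteq> span W" by (rule sub)
    show "dim (span W) \<le> dim (T ` span W)"
      using dim_image_eq[OF lin, of "span W"] inj by (simp add: span_span)
  qed
  define y where "y = (\<Sum>w\<in>W. (w \<bullet> w / 2) *\<^sub>R w)"
  have "y \<in> span W" unfolding y_def by (auto intro!: span_sum span_scale intro: span_base)
  then obtain x where x: "x \<in> span W" "T x = y" using eq by (metis imageE)
  have sf: "(\<Sum>w\<in>W. (x \<bullet> w - w \<bullet> w / 2) *\<^sub>R w) = 0"
    using x(2) unfolding T_def y_def by (simp add: scaleR_diff_left sum_subtractf)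
  have c0: "\<forall>c. (\<Sum>v\<in>W. c v *\<^sub>R v) = 0 \<longrightarrow> (\<forall>v\<in>W. c v = 0)"
    using indE by simp
  have h: "(\<Sum>w\<in>W. (x \<bullet> w - w \<bullet> w / 2) *\<^sub>R w) = 0 \<longrightarrow> (\<forall>w\<in>W. x \<bullet> w - w \<bullet> w / 2 = 0)"
    by (rule spec[OF c0])
  have "\<forall>w\<in>W. x \<bullet> w - w \<bullet> w / 2 = 0"
    by (rule mp[OF h sf])
  then have ex: "x \<in> span W \<and> (\<forall>w\<in>W. x \<bullet> w = w \<bullet> w / 2)" using x(1) by simp
  show ?thesis
  proof (rule ex1I[of _ x])
    show "x \<in> span W \<and> (\<forall>w\<in>W. x \<bullet> w = w \<bullet> w / 2)" by (rule ex)
    fix z assume z: "z \<in> span W \<and> (\<forall>w\<in>W. z \<bullet> w = w \<bullet> w / 2)"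
    have "z - x = 0"
    proof (rule orth_span_zero[of _ W])
      show "z - x \<in> span W" using z ex by (simp add: span_diff)
      fix w assume "w \<in> W"
      then have "z \<bullet> w = w \<bullet> w / 2" "x \<bullet> w = w \<bullet> w / 2" using z ex by blast+
      then show "(z - x) \<bullet> w = 0" by (simp add: inner_diff_left)
    qed
    then show "z = x" by simp
  qed
qed

lemma dist_cond:
  fixes a x w :: "'a::euclidean_space"
  shows "dist (a + x) (a + w) = dist (a + x) a \<longleftrightarrow> x \<bullet> w = w \<bullet> w / 2"
proof -
  have "dist (a + x) (a + w) = norm (x - w)" by (simp add: dist_norm algebra_simps)
  moreover have "dist (a + x) a = norm x" by (simp add: dist_norm)
  ultimately have "dist (a + x) (a + w) = dist (a + x) a \<longleftrightarrow> norm (x - w)^2 = norm x ^ 2"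
    by (metis norm_ge_zero power2_eq_imp_eq)
  also have "\<dots> \<longleftrightarrow> x \<bullet> w = w \<bullet> w / 2"
  proof -
    have "norm (x - w)^2 = x \<bullet> x - 2 * (x \<bullet> w) + w \<bullet> w"
      by (simp add: power2_norm_eq_inner inner_diff_left inner_diff_right inner_commute[of w x])
    moreover have "norm x ^ 2 = x \<bullet> x" by (simp add: power2_norm_eq_inner)
    ultimately show ?thesis by auto
  qed
  finally show ?thesis .
qed

lemma circ_prop:
  fixes A :: "nat \<Rightarrow> 'a::euclidean_space"
  assumes "is_simplex n A"
  shows "\<forall>i\<le>n. dist (circumcenter n A) (A i) = dist (circumcenter n A) (A 0)"
proof -
  define a0 where "a0 = A 0"
  define P where "P = A ` {0..n}"
  define W where "W = (+) (- a0) ` (P - {a0})"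
  have a0P: "a0 \<in> P" unfolding a0_def P_def by auto
  have ind: "independent W"
    using affine_dependent_iff_dependent2[OF a0P] assms unfolding is_simplex_def W_def P_def by simp
  have hull: "affine hull P = (+) a0 ` span W"
    unfolding W_def by (rule affine_hull_span2[OF a0P])
  define Q where "Q = (\<lambda>c. c \<in> affine hull P \<and> (\<forall>i\<le>n. dist c (A i) = dist c (A 0)))"
  define R where "R = (\<lambda>x. x \<in> span W \<and> (\<forall>w\<in>W. x \<bullet> w = w \<bullet> w / 2))"
  have QR: "Q c \<longleftrightarrow> R (c - a0)" for c
  proof -
    define x where "x = c - a0"
    have c: "c = a0 + x" unfolding x_def by simp
    have h1: "c \<in> affine hull P \<longleftrightarrow> x \<in> span W"
      unfolding hull c by auto
    have h2: "(\<forall>i\<le>n. dist c (A i) = dist c (A 0)) \<longleftrightarrow> (\<forall>w\<in>W. x \<bullet> w = w \<bullet> w / 2)"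
    proof
      assume H: "\<forall>i\<le>n. dist c (A i) = dist c (A 0)"
      show "\<forall>w\<in>W. x \<bullet> w = w \<bullet> w / 2"
      proof
        fix w assume "w \<in> W"
        then obtain p where p: "p \<in> P" "w = - a0 + p" unfolding W_def by blast
        from p(1) obtain i where i0: "i \<le> n" "p = A i" unfolding P_def by auto
        have i: "i \<le> n" "w = - a0 + A i" using i0 p by auto
        have Ai: "A i = a0 + w" using i by simp
        have e: "dist c (A i) = dist c (A 0)" using H i(1) by blast
        have e2: "dist (a0 + x) (a0 + w) = dist (a0 + x) a0"
          using e unfolding Ai a0_def[symmetric] c .
        show "x \<bullet> w = w \<bullet> w / 2"
          using dist_cond[of a0 x w] e2 by blast
      qed
    next
      assume H: "\<forall>w\<in>W. x \<bullet> w = w \<bullet> w / 2"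
      show "\<forall>i\<le>n. dist c (A i) = dist c (A 0)"
      proof (intro allI impI)
        fix i assume i: "i \<le> n"
        define w where "w = - a0 + A i"
        have Ai: "A i = a0 + w" unfolding w_def by simp
        show "dist c (A i) = dist c (A 0)"
        proof (cases "A i = a0")
          case True then show ?thesis by (simp add: a0_def)
        next
          case False
          then have "w \<in> W" unfolding W_def P_def w_def using i by auto
          then show ?thesis using H dist_cond[of a0 x w] Ai unfolding c a0_def by simp
        qed
      qed
    qed
    show ?thesis unfolding Q_def R_def x_def[symmetric] using h1 h2 by simp
  qed
  have "\<exists>!x. R x" unfolding R_def by (rule solve_unique[OF ind])
  then obtain x where x: "R x" and xu: "\<And>y. R y \<Longrightarrow> y = x" by blast
  have "\<exists>!c. Q c"
  proof (rule ex1I[of _ "a0 + x"])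
    show "Q (a0 + x)" using QR x by simp
    fix c assume "Q c"
    then have "R (c - a0)" using QR by simp
    then have "c - a0 = x" by (rule xu)
    then show "c = a0 + x" by (simp add: algebra_simps)
  qed
  then have QT: "Q (THE c. Q c)" by (rule theI')
  have cc: "circumcenter n A = (THE c. Q c)" unfolding circumcenter_def Q_def P_def ..
  have "\<forall>i\<le>n. dist (THE c. Q c) (A i) = dist (THE c. Q c) (A 0)"
    using QT unfolding Q_def by (rule conjunct2)
  then show ?thesis unfolding cc .
qed


lemma norm_diff_sq:
  fixes a b :: "'a::real_inner"
  shows "norm (a - b)^2 = norm a ^ 2 - 2 * (a \<bullet> b) + norm b ^ 2"
  by (simp add: power2_norm_eq_inner inner_diff_left inner_diff_right inner_commute[of b a])

lemma sum_sq_const: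
  fixes A :: "nat \<Rightarrow> 'a::euclidean_space"
  assumes G: "G = centroid n A" and r: "\<forall>i\<le>n. dist G (A i) = r" and i: "i \<le> n"
  shows "(\<Sum>l\<le>n. dist (A i) (A l)^2) = real (n+1) * r^2 + (\<Sum>l\<le>n. dist (A l) G ^ 2)"
proof -
  define u where "u = (\<lambda>l. A l - G)"
  have GG: "real (n+1) *\<^sub>R G = (\<Sum>l\<le>n. A l)"
    unfolding G centroid_def by simp
  have "(\<Sum>l\<le>n. u l) = (\<Sum>l\<le>n. A l) - (\<Sum>l\<le>n. G)"
    unfolding u_def by (rule sum_subtractf)
  also have "\<dots> = (\<Sum>l\<le>n. A l) - real (n+1) *\<^sub>R G"
    by (simp add: sum_constant_scaleR)
  also have "\<dots> = 0" unfolding GG by simp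
  finally have su: "(\<Sum>l\<le>n. u l) = 0" .
  have d: "dist (A i) (A l)^2 = norm (u i)^2 - 2 * (u i \<bullet> u l) + norm (u l)^2" for l
  proof -
    have "A i - A l = u i - u l" unfolding u_def by simp
    then show ?thesis by (simp add: dist_norm norm_diff_sq)
  qed
  have "(\<Sum>l\<le>n. dist (A i) (A l)^2) = (\<Sum>l\<le>n. norm (u i)^2) - 2 * (u i \<bullet> (\<Sum>l\<le>n. u l)) + (\<Sum>l\<le>n. norm (u l)^2)"
    by (simp add: d sum.distrib sum_subtractf inner_sum_right sum_distrib_left)
  also have "\<dots> = real (n+1) * r^2 + (\<Sum>l\<le>n. dist (A l) G ^ 2)"
  proof -
    have "norm (u i) = r" using r i unfolding u_def by (simp add: dist_norm norm_minus_commute)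
    moreover have "norm (u l) = dist (A l) G" for l unfolding u_def by (simp add: dist_norm)
    ultimately show ?thesis using su by simp
  qed
  finally show ?thesis .
qed

theorem theorem6p2:
  fixes A :: "nat \<Rightarrow> 'a::euclidean_space" and n :: nat
  assumes "n \<ge> 2"
    and "is_pre_kite n A"
    and "circumcenter n A = centroid n A"
  shows "is_regular_simplex n A"
proof -
  have simp: "is_simplex n A" using assms(2) unfolding is_pre_kite_def by blast
  obtain k where k: "k \<le> n" and H: "\<forall>i\<le>n. \<forall>j\<le>n. \<forall>p\<le>n. \<forall>q\<le>n.
        i \<noteq> k \<and> j \<noteq> k \<and> p \<noteq> k \<and> q \<noteq> k \<and> i \<noteq> j \<and> p \<noteq> q
        \<longrightarrow> dist (A i) (A j) = dist (A p) (A q)"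
  proof -
    have "\<exists>k\<le>n. \<forall>i\<le>n. \<forall>j\<le>n. \<forall>p\<le>n. \<forall>q\<le>n.
        i \<noteq> k \<and> j \<noteq> k \<and> p \<noteq> k \<and> q \<noteq> k \<and> i \<noteq> j \<and> p \<noteq> q
        \<longrightarrow> dist (A i) (A j) = dist (A p) (A q)"
      using assms(2) unfolding is_pre_kite_def by (rule conjunct2)
    then show ?thesis using that by (elim exE conjE)
  qed
  define G where "G = centroid n A"
  define r where "r = dist G (A 0)"
  have rr: "\<forall>i\<le>n. dist G (A i) = r"
    using circ_prop[OF simp] unfolding assms(3) G_def r_def .
  define S where "S = (\<lambda>i. \<Sum>l\<le>n. dist (A i) (A l)^2)"
  have Seq: "S i = S j" if "i \<le> n" "j \<le> n" for i j
    unfolding S_def using sum_sq_const[OF G_def rr that(1)] sum_sq_const[OF G_def rr that(2)] by simp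
  define a :: nat where "a = (if k = 0 then 1 else 0)"
  define b :: nat where "b = (if k = 2 then 1 else 2)"
  have ab: "a \<le> n" "b \<le> n" "a \<noteq> k" "b \<noteq> k" "a \<noteq> b"
    using assms(1) unfolding a_def b_def by auto
  define d where "d = dist (A a) (A b)"
  define e where "e = dist (A a) (A k)"
  have hd: "dist (A i) (A j) = d" if "i \<le> n" "j \<le> n" "i \<noteq> k" "j \<noteq> k" "i \<noteq> j" for i j
    using H[rule_format, of i j a b] that ab unfolding d_def by simp
  have Si: "S i = real (n - 1) * d^2 + dist (A i) (A k)^2" if "i \<le> n" "i \<noteq> k" for i
  proof -
    let ?f = "\<lambda>l. dist (A i) (A l)^2"
    have "S i = ?f i + sum ?f ({..n} - {i})"
      unfolding S_def using that by (simp add: sum.remove)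
    also have "sum ?f ({..n} - {i}) = ?f k + sum ?f ({..n} - {i} - {k})"
      using that k by (subst sum.remove[of _ k]) auto
    also have "sum ?f ({..n} - {i} - {k}) = sum (\<lambda>l. d^2) ({..n} - {i} - {k})"
      by (rule sum.cong) (use that hd in auto)
    also have "\<dots> = real (n - 1) * d^2"
    proof -
      have "card ({..n} - {i} - {k}) = n - 1"
        using that k by (simp add: card_Diff_singleton)
      then show ?thesis by simp
    qed
    finally show ?thesis by simp
  qed
  have ek: "dist (A i) (A k) = e" if "i \<le> n" "i \<noteq> k" for i
  proof -
    have "dist (A i) (A k)^2 = e^2"
      using Seq[of i a] Si[OF that] Si[of a] ab that unfolding e_def by simp
    then show ?thesis by (simp add: power2_eq_iff_nonneg e_def)
  qed
  have Sk: "S k = real n * e^2"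
  proof -
    let ?f = "\<lambda>l. dist (A k) (A l)^2"
    have "S k = ?f k + sum ?f ({..n} - {k})"
      unfolding S_def using k by (simp add: sum.remove)
    also have "sum ?f ({..n} - {k}) = sum (\<lambda>l. e^2) ({..n} - {k})"
      by (rule sum.cong) (use ek in \<open>auto simp: dist_commute\<close>)
    also have "\<dots> = real n * e^2" using k by (simp add: card_Diff_singleton)
    finally show ?thesis by simp
  qed
  have "real n * e^2 = real (n - 1) * d^2 + e^2"
    using Seq[of k a] Sk Si[of a] ab k ek[of a] by simp
  moreover have "real (n - 1) = real n - 1" using assms(1) by (simp add: of_nat_diff)
  ultimately have "(real n - 1) * (e^2 - d^2) = 0" by (simp add: algebra_simps)
  moreover have "real n - 1 \<noteq> 0" using assms(1) by simp
  ultimately have "e^2 = d^2" by simp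
  then have de: "d = e" by (simp add: power2_eq_iff_nonneg d_def e_def)
  have all: "dist (A i) (A j) = d" if "i \<le> n" "j \<le> n" "i \<noteq> j" for i j
  proof (cases "i = k")
    case True
    then show ?thesis using ek[of j] that de by (simp add: dist_commute)
  next
    case False
    show ?thesis
    proof (cases "j = k")
      case True
      then show ?thesis using ek[of i] that de False by simp
    next
      case False2: False
      then show ?thesis using hd that False by simp
    qed
  qed
  show ?thesis unfolding is_regular_simplex_def using simp all by simp
qed

end
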